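(* For every integer $r\ge4$, \[ f_r(r+1,r)=\rho_r\big(T(r+2,r)\big)=\frac{4}{r+2}. \]
   Context: $\mathcal{G}(\Delta,\omega)$ denotes the class of finite simple graphs $G$ with maximum degree $\Delta(G)\le\Delta$ and clique number $\omega(G)\le\omega$. $k_t(G)$ is the number of copies of $K_t$ in $G$ and $\rho_t(G)=k_t(G)/|V(G)|$. $f_t(\Delta,\omega)=\sup\{\rho_t(G): G\in\mathcal{G}(\Delta,\omega),\ |V(G)|\ge 1\}$. $T(n,r)$ denotes the $r$-partite Turán graph on $n$ vertices; for $r\ge 4$, $T(r+2,r)$ has $r-2$ parts of size $1$ and two parts of size $2$. *)

theory Defs
  imports Complex_Main
begin

definition simple_graph :: "'a set \<Rightarrow> 'a set set \<Rightarrow> bool" where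
  "simple_graph V E \<longleftrightarrow> finite V \<and> (\<forall>e\<in>E. e \<subseteq> V \<and> card e = 2)"

definition graph_degree :: "'a set \<Rightarrow> 'a set set \<Rightarrow> 'a \<Rightarrow> nat" where
  "graph_degree V E v = card {u \<in> V. {u, v} \<in> E}"

definition is_clique :: "'a set \<Rightarrow> 'a set set \<Rightarrow> 'a set \<Rightarrow> bool" where
  "is_clique V E S \<longleftrightarrow> S \<subseteq> V \<and> (\<forall>x\<in>S. \<forall>y\<in>S. x \<noteq> y \<longrightarrow> {x, y} \<in> E)"

definition max_degree_le :: "'a set \<Rightarrow> 'a set set \<Rightarrow> nat \<Rightarrow> bool" where
  "max_degree_le V E D \<longleftrightarrow> (\<forall>v\<in>V. graph_degree V E v \<le> D)"

definition clique_number_le :: "'a set \<Rightarrow> 'a set set \<Rightarrow> nat \<Rightarrow> bool" where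
  "clique_number_le V E w \<longleftrightarrow> (\<forall>S. is_clique V E S \<longrightarrow> card S \<le> w)"

definition k_count :: "nat \<Rightarrow> 'a set \<Rightarrow> 'a set set \<Rightarrow> nat" where
  "k_count t V E = card {S. is_clique V E S \<and> card S = t}"

definition rho :: "nat \<Rightarrow> 'a set \<Rightarrow> 'a set set \<Rightarrow> real" where
  "rho t V E = real (k_count t V E) / real (card V)"

text \<open>The class G(D,w); vertices are taken from nat (every finite graph is
  isomorphic to one on natural-number vertices).\<close>
definition graph_class :: "nat \<Rightarrow> nat \<Rightarrow> (nat set \<times> nat set set) set" where
  "graph_class D w = {(V, E). simple_graph V E \<and> max_degree_le V E D \<and> clique_number_le V E w}"

definition f_sup :: "nat \<Rightarrow> nat \<Rightarrow> nat \<Rightarrow> real" where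
  "f_sup t D w = Sup {rho t V E | V E. (V, E) \<in> graph_class D w \<and> card V \<ge> 1}"

text \<open>Turan graph T(n,r): vertices 0..n-1, vertex i in part (i mod r), edges between
  vertices of different parts; the parts have sizes as equal as possible.\<close>
definition turan_V :: "nat \<Rightarrow> nat set" where
  "turan_V n = {0..<n}"

definition turan_E :: "nat \<Rightarrow> nat \<Rightarrow> nat set set" where
  "turan_E n r = {{i, j} | i j. i < n \<and> j < n \<and> i mod r \<noteq> j mod r}"

end

theory Submission
  imports Defs
begin


locale G =
  fixes V :: "'a set" and E :: "'a set set" and r :: nat
  assumes sg: "simple_graph V E"
    and deg: "max_degree_le V E (r+1)"
    and cl: "clique_number_le V E r"
    and r4: "4 \<le> r"
begin

definition adj where "adj x y \<longleftrightarrow> {x,y} \<in> E"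

lemma finV: "finite V" using sg unfolding simple_graph_def by auto

lemma adj_sym: "adj x y = adj y x" unfolding adj_def by (simp add: insert_commute)

lemma adj_V: "adj x y \<Longrightarrow> x \<in> V \<and> y \<in> V \<and> x \<noteq> y"
proof -
  assume a: "adj x y"
  hence "{x,y} \<subseteq> V" "card {x,y} = 2" using sg unfolding simple_graph_def adj_def by auto
  thus ?thesis by (cases "x = y") auto
qed

lemma clique_iff: "is_clique V E S \<longleftrightarrow> S \<subseteq> V \<and> (\<forall>x\<in>S. \<forall>y\<in>S. x \<noteq> y \<longrightarrow> adj x y)"
  unfolding is_clique_def adj_def by simp

lemma clique_le: "is_clique V E S \<Longrightarrow> card S \<le> r"
  using cl unfolding clique_number_le_def by auto

definition Cl where "Cl = {S. is_clique V E S \<and> card S = r}"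

lemma Cl_sub: "K \<in> Cl \<Longrightarrow> K \<subseteq> V" unfolding Cl_def clique_iff by auto
lemma Cl_fin: "K \<in> Cl \<Longrightarrow> finite K" using Cl_sub finV finite_subset by blast
lemma Cl_card: "K \<in> Cl \<Longrightarrow> card K = r" unfolding Cl_def by auto
lemma Cl_adj: "K \<in> Cl \<Longrightarrow> x \<in> K \<Longrightarrow> y \<in> K \<Longrightarrow> x \<noteq> y \<Longrightarrow> adj x y"
  unfolding Cl_def clique_iff by auto
lemma finCl: "finite Cl"
proof -
  have "Cl \<subseteq> Pow V" using Cl_sub by auto
  thus ?thesis using finV finite_subset by blast
qed

lemma deg_le: "v \<in> V \<Longrightarrow> card {u\<in>V. adj u v} \<le> r+1"
  using deg unfolding max_degree_le_def graph_degree_def adj_def by auto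

definition Out where "Out v K = {x \<in> V - K. adj v x}"

lemma O_fin: "finite (Out v K)" using finV unfolding Out_def by auto

lemma O_card: assumes K: "K \<in> Cl" and v: "v \<in> K" shows "card (Out v K) \<le> 2"
proof -
  have sub: "(K - {v}) \<union> Out v K \<subseteq> {u\<in>V. adj u v}"
    using Cl_sub[OF K] Cl_adj[OF K v] adj_sym unfolding Out_def by auto
  have vV: "v \<in> V" using Cl_sub[OF K] v by auto
  have "card ((K - {v}) \<union> Out v K) = card (K - {v}) + card (Out v K)"
    by (rule card_Un_disjoint) (use Cl_fin[OF K] O_fin in \<open>auto simp: Out_def\<close>)
  moreover have "card (K - {v}) = r - 1" using Cl_card[OF K] v Cl_fin[OF K] by simp
  moreover have "card ((K - {v}) \<union> Out v K) \<le> r + 1"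
  proof -
    have "finite {u\<in>V. adj u v}" using finV by auto
    from card_mono[OF this sub] show ?thesis using deg_le[OF vV] by linarith
  qed
  ultimately show ?thesis using r4 by linarith
qed

lemma Cl_inj: assumes K: "K \<in> Cl" and K1: "K1 \<in> Cl" and K2: "K2 \<in> Cl" and eq: "K1 - K = K2 - K"
  shows "K1 = K2"
proof -
  let ?X = "K1 \<union> (K2 \<inter> K)"
  have "is_clique V E ?X"
    unfolding clique_iff
  proof (intro conjI ballI impI)
    show "?X \<subseteq> V" using Cl_sub[OF K1] Cl_sub[OF K] by auto
  next
    fix x y assume x: "x \<in> ?X" and y: "y \<in> ?X" and ne: "x \<noteq> y"
    show "adj x y"
    proof (cases "x \<in> K")
      case True
      show ?thesis
      proof (cases "y \<in> K")
        case True with \<open>x \<in> K\<close> show ?thesis using Cl_adj[OF K] ne by auto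
      next
        case False
        then have "y \<in> K1" "y \<in> K2" using y eq by auto
        show ?thesis
        proof (cases "x \<in> K1")
          case True thus ?thesis using Cl_adj[OF K1] \<open>y \<in> K1\<close> ne by auto
        next
          case False thus ?thesis using x Cl_adj[OF K2] \<open>y \<in> K2\<close> ne by auto
        qed
      qed
    next
      case False
      then have "x \<in> K1" "x \<in> K2" using x eq by auto
      show ?thesis
      proof (cases "y \<in> K1")
        case True thus ?thesis using Cl_adj[OF K1] \<open>x \<in> K1\<close> ne by auto
      next
        case False thus ?thesis using y Cl_adj[OF K2] \<open>x \<in> K2\<close> ne by auto
      qed
    qed
  qed
  hence "card ?X \<le> r" by (rule clique_le)
  have fX: "finite ?X" using Cl_fin[OF K1] Cl_fin[OF K] by auto
  have "K1 = ?X" by (rule card_seteq[OF fX]) (use \<open>card ?X \<le> r\<close> Cl_card[OF K1] in auto)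
  hence "K2 \<subseteq> K1" using eq by blast
  moreover have "card K1 \<le> card K2" using Cl_card[OF K1] Cl_card[OF K2] by simp
  ultimately have "K2 = K1" by (rule card_seteq[OF Cl_fin[OF K1]])
  thus ?thesis by simp
qed

definition S where "S v = {K' \<in> Cl. v \<in> K'}"
definition c where "c v = card (S v)"
definition A where "A v K = (\<lambda>K'. K' - K) ` S v"

lemma finS: "finite (S v)" using finCl unfolding S_def by auto

lemma A_sub: "K \<in> Cl \<Longrightarrow> v \<in> K \<Longrightarrow> A v K \<subseteq> Pow (Out v K)"
proof
  assume K: "K \<in> Cl" and v: "v \<in> K"
  fix B assume "B \<in> A v K"
  then obtain K' where K': "K' \<in> Cl" "v \<in> K'" and B: "B = K' - K" unfolding A_def S_def by auto
  have "\<And>x. x \<in> K' - K \<Longrightarrow> x \<in> Out v K"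
  proof -
    fix x assume x: "x \<in> K' - K"
    hence "x \<noteq> v" using v by auto
    thus "x \<in> Out v K" using x Cl_sub[OF K'(1)] Cl_adj[OF K'(1) K'(2)] unfolding Out_def by auto
  qed
  thus "B \<in> Pow (Out v K)" using B by auto
qed

lemma c_eq: assumes "K \<in> Cl" shows "c v = card (A v K)"
proof -
  have "inj_on (\<lambda>K'. K' - K) (S v)"
    unfolding inj_on_def S_def using Cl_inj[OF assms] by auto
  thus ?thesis unfolding c_def A_def by (simp add: card_image)
qed

lemma c_le4: assumes K: "K \<in> Cl" and v: "v \<in> K" shows "c v \<le> 4"
proof -
  have "c v \<le> card (Pow (Out v K))"
    unfolding c_eq[OF K] by (rule card_mono) (use O_fin A_sub[OF K v] in auto)
  also have "\<dots> = 2 ^ card (Out v K)" using O_fin card_Pow by blast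
  also have "\<dots> \<le> 2 ^ 2" using O_card[OF K v] by (intro power_increasing) auto
  finally show ?thesis by simp
qed

lemma c_ge1: "K \<in> Cl \<Longrightarrow> v \<in> K \<Longrightarrow> 1 \<le> c v"
proof -
  assume "K \<in> Cl" "v \<in> K"
  hence "K \<in> S v" unfolding S_def by auto
  hence "S v \<noteq> {}" by auto
  thus ?thesis unfolding c_def using finS[of v] by (simp add: Suc_leI card_gt_0_iff)
qed

end


context G begin

lemma type1_miss:
  assumes K: "K \<in> Cl" and K': "K' \<in> Cl" and x: "K' - K = {x}"
  shows "\<exists>u\<in>K. \<not> adj x u \<and> (\<forall>w\<in>K. w \<noteq> u \<longrightarrow> adj x w)"
proof -
  have xK: "x \<notin> K" "x \<in> K'" using x by auto
  have fK: "finite K" "finite K'" using Cl_fin K K' by auto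
  have "K' = insert x (K' \<inter> K)" using x by auto
  hence "card K' = Suc (card (K' \<inter> K))" using fK xK by (metis card_insert_disjoint finite_Int IntD2)
  hence ci: "card (K \<inter> K') = r - 1" using Cl_card[OF K'] by (simp add: Int_commute)
  have "card (K - K') = card K - card (K \<inter> K')" by (rule card_Diff_subset_Int) (use fK in auto)
  hence "card (K - K') = 1" using ci Cl_card[OF K] r4 by simp
  then obtain u where u: "K - K' = {u}" by (auto simp: card_Suc_eq)
  have adjw: "\<forall>w\<in>K. w \<noteq> u \<longrightarrow> adj x w"
  proof (intro ballI impI)
    fix w assume "w \<in> K" "w \<noteq> u"
    hence "w \<in> K'" using u by auto
    thus "adj x w" using Cl_adj[OF K' xK(2)] \<open>w \<in> K\<close> xK by auto
  qed
  have "\<not> adj x u"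
  proof
    assume a: "adj x u"
    have "is_clique V E (insert x K)"
      unfolding clique_iff
    proof (intro conjI ballI impI)
      show "insert x K \<subseteq> V" using Cl_sub[OF K] Cl_sub[OF K'] xK by auto
    next
      fix y z assume "y \<in> insert x K" "z \<in> insert x K" "y \<noteq> z"
      thus "adj y z" using adjw a Cl_adj[OF K] adj_sym by auto
    qed
    hence "card (insert x K) \<le> r" by (rule clique_le)
    thus False using Cl_card[OF K] fK xK by simp
  qed
  moreover have "u \<in> K" using u by auto
  ultimately show ?thesis using adjw by auto
qed

lemma type1_miss_uniq:
  assumes K: "K \<in> Cl" and K': "K' \<in> Cl" and x: "K' - K = {x}" and u: "u \<in> K" "\<not> adj x u"
  shows "\<forall>w\<in>K. w \<noteq> u \<longrightarrow> adj x w"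
  using type1_miss[OF K K' x] u by metis

lemma out_three:
  assumes K: "K \<in> Cl" and w: "w \<in> K" and xyz: "x \<in> Out w K" "y \<in> Out w K" "z \<in> Out w K"
    and d: "x \<noteq> y" "x \<noteq> z" "y \<noteq> z"
  shows False
proof -
  have "{x,y,z} \<subseteq> Out w K" using xyz by auto
  hence "card {x,y,z} \<le> card (Out w K)" using O_fin by (rule card_mono[rotated])
  thus False using O_card[OF K w] d by simp
qed

lemma outI: "K \<in> Cl \<Longrightarrow> w \<in> K \<Longrightarrow> x \<in> V \<Longrightarrow> x \<notin> K \<Longrightarrow> adj x w \<Longrightarrow> x \<in> Out w K"
  unfolding Out_def using adj_sym by auto

lemma three_type1:
  assumes K: "K \<in> Cl"
    and Kx: "Kx \<in> Cl" "Kx - K = {x}" and Ky: "Ky \<in> Cl" "Ky - K = {y}" and Kz: "Kz \<in> Cl" "Kz - K = {z}"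
    and d: "x \<noteq> y" "x \<noteq> z" "y \<noteq> z"
  shows False
proof -
  obtain ux where ux: "ux \<in> K" "\<forall>w\<in>K. w \<noteq> ux \<longrightarrow> adj x w" using type1_miss[OF K Kx] by blast
  obtain uy where uy: "uy \<in> K" "\<forall>w\<in>K. w \<noteq> uy \<longrightarrow> adj y w" using type1_miss[OF K Ky] by blast
  obtain uz where uz: "uz \<in> K" "\<forall>w\<in>K. w \<noteq> uz \<longrightarrow> adj z w" using type1_miss[OF K Kz] by blast
  have "card {ux,uy,uz} \<le> 3" by (simp add: card_insert_le_m1)
  hence "card {ux,uy,uz} < card K" using Cl_card[OF K] r4 by simp
  hence "\<not> K \<subseteq> {ux,uy,uz}" using card_mono by (metis finite.emptyI finite.insertI not_le)
  then obtain w where w: "w \<in> K" "w \<noteq> ux" "w \<noteq> uy" "w \<noteq> uz" by auto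
  have mem: "x \<in> Kx" "y \<in> Ky" "z \<in> Kz" using Kx(2) Ky(2) Kz(2) by auto
  have xs: "x \<in> V" "x \<notin> K" "y \<in> V" "y \<notin> K" "z \<in> V" "z \<notin> K"
    using mem Kx Ky Kz Cl_sub[OF Kx(1)] Cl_sub[OF Ky(1)] Cl_sub[OF Kz(1)] by auto
  show False
    by (rule out_three[OF K w(1) outI[OF K w(1)] outI[OF K w(1)] outI[OF K w(1)] d])
       (use xs ux uy uz w in auto)
qed

end



lemma card2le: "card {p,q} \<le> 2" by (cases "p = q") auto

lemma pow_card: assumes "finite Ob" "Aa \<subseteq> Pow Ob" shows "card Aa \<le> 2 ^ card Ob"
proof -
  have "card Aa \<le> card (Pow Ob)" using assms by (intro card_mono) auto
  also have "card (Pow Ob) = 2 ^ card Ob" using card_Pow assms(1) by blast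
  finally show ?thesis .
qed

lemma pow_two: assumes "finite Ob" "card Ob \<le> 2" "Aa \<subseteq> Pow Ob" "3 \<le> card Aa"
  shows "\<exists>a b. a \<noteq> b \<and> Ob = {a,b}"
proof -
  have "card Ob = 2"
  proof (rule ccontr)
    assume "card Ob \<noteq> 2"
    hence "card Ob \<le> 1" using assms(2) by linarith
    hence "(2::nat) ^ card Ob \<le> 2 ^ 1" by (intro power_increasing) auto
    thus False using pow_card[OF assms(1,3)] assms(4) by simp
  qed
  thus ?thesis unfolding card_2_iff by blast
qed

lemma sub2: assumes "X \<subseteq> {a,b}" shows "X = {} \<or> X = {a} \<or> X = {b} \<or> X = {a,b}"
proof (cases "a \<in> X")
  case True
  show ?thesis
  proof (cases "b \<in> X")
    case True
    hence "X = {a,b}" using assms \<open>a \<in> X\<close> by blast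
    thus ?thesis by simp
  next
    case False
    hence "X = {a}" using assms \<open>a \<in> X\<close> by blast
    thus ?thesis by simp
  qed
next
  case False
  show ?thesis
  proof (cases "b \<in> X")
    case True
    hence "X = {b}" using assms \<open>a \<notin> X\<close> by blast
    thus ?thesis by simp
  next
    case False
    hence "X = {}" using assms \<open>a \<notin> X\<close> by blast
    thus ?thesis by simp
  qed
qed

lemma sub_cases: assumes "Aa \<subseteq> Pow {a,b}" "X \<in> Aa"
  shows "X = {} \<or> X = {a} \<or> X = {b} \<or> X = {a,b}"
proof -
  have "X \<in> Pow {a,b}" using assms by (rule subsetD)
  hence "X \<subseteq> {a,b}" by (rule PowD)
  thus ?thesis by (rule sub2)
qed

lemma pow3: assumes "finite Ob" "card Ob \<le> 2" "Aa \<subseteq> Pow Ob" "3 \<le> card Aa"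
  shows "\<exists>y z. y \<noteq> z \<and> Ob = {y,z} \<and> {y} \<in> Aa \<and> ({z} \<in> Aa \<or> {y,z} \<in> Aa)"
proof -
  obtain a b where ab: "a \<noteq> b" "Ob = {a,b}" using pow_two[OF assms] by blast
  have AP: "Aa \<subseteq> Pow {a,b}" using assms(3) ab by simp
  have small: False if "Aa \<subseteq> {p,q}" for p q
  proof -
    have "card Aa \<le> card {p,q}" using that by (intro card_mono) auto
    thus False using card2le[of p q] assms(4) by linarith
  qed
  show ?thesis
  proof (cases "{a} \<in> Aa")
    case True
    show ?thesis
    proof (cases "{b} \<in> Aa \<or> {a,b} \<in> Aa")
      case True with \<open>{a} \<in> Aa\<close> ab show ?thesis by (intro exI[of _ a] exI[of _ b]) simp
    next
      case False
      have "Aa \<subseteq> {{},{a}}"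
      proof
        fix X assume X: "X \<in> Aa"
        from sub_cases[OF AP X] show "X \<in> {{},{a}}"
        proof (elim disjE)
        qed (use X False in auto)
      qed
      thus ?thesis using small by blast
    qed
  next
    case False
    show ?thesis
    proof (cases "{b} \<in> Aa")
      case True
      show ?thesis
      proof (cases "{a,b} \<in> Aa")
        case True
        hence "{b,a} \<in> Aa" by (simp add: insert_commute)
        moreover have "Ob = {b,a}" using ab by (simp add: insert_commute)
        ultimately show ?thesis using \<open>{b} \<in> Aa\<close> ab(1) by (intro exI[of _ b] exI[of _ a]) simp
      next
        case False
        have "Aa \<subseteq> {{},{b}}"
        proof
          fix X assume X: "X \<in> Aa"
          from sub_cases[OF AP X] show "X \<in> {{},{b}}"
          proof (elim disjE)
          qed (use X False \<open>{a} \<notin> Aa\<close> in auto)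
        qed
        thus ?thesis using small by blast
      qed
    next
      case False
      have "Aa \<subseteq> {{},{a,b}}"
      proof
        fix X assume X: "X \<in> Aa"
        from sub_cases[OF AP X] show "X \<in> {{},{a,b}}"
        proof (elim disjE)
        qed (use X False \<open>{a} \<notin> Aa\<close> in auto)
      qed
      thus ?thesis using small by blast
    qed
  qed
qed

lemma pow4: assumes "finite Ob" "card Ob \<le> 2" "Aa \<subseteq> Pow Ob" "4 \<le> card Aa"
  shows "\<exists>y z. y \<noteq> z \<and> Ob = {y,z} \<and> {y} \<in> Aa \<and> {z} \<in> Aa \<and> {y,z} \<in> Aa"
proof -
  have "3 \<le> card Aa" using assms(4) by simp
  then obtain a b where ab: "a \<noteq> b" "Ob = {a,b}" using pow_two[OF assms(1-3)] by blast
  have cP: "card (Pow Ob) = 4" using ab by (simp add: card_Pow)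
  have fP: "finite (Pow Ob)" using assms(1) by simp
  have "Aa = Pow Ob" by (rule card_seteq[OF fP assms(3)]) (use assms(4) cP in simp)
  hence "{a} \<in> Aa" "{b} \<in> Aa" "{a,b} \<in> Aa" using ab by auto
  thus ?thesis using ab by blast
qed

context G begin

lemma A_mem: "B \<in> A v K \<Longrightarrow> \<exists>K'. K' \<in> Cl \<and> v \<in> K' \<and> K' - K = B"
  unfolding A_def S_def by auto

lemma good:
  assumes K: "K \<in> Cl" and Kx: "Kx \<in> Cl" "Kx - K = {x}" and u: "u \<in> K" "\<not> adj x u"
  shows "c u \<le> 2"
proof (rule ccontr)
  assume "\<not> c u \<le> 2"
  hence "3 \<le> card (A u K)" using c_eq[OF K] by simp
  then obtain y z where yz: "y \<noteq> z" "Out u K = {y,z}" "{y} \<in> A u K" "{z} \<in> A u K \<or> {y,z} \<in> A u K"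
    using pow3[OF O_fin O_card[OF K u(1)] A_sub[OF K u(1)]] by blast
  obtain Ky where Ky: "Ky \<in> Cl" "Ky - K = {y}" using A_mem[OF yz(3)] by blast
  have xnot: "x \<notin> Out u K" using u(2) adj_sym unfolding Out_def by auto
  hence xyz: "x \<noteq> y" "x \<noteq> z" using yz(2) by auto
  have xmem: "x \<in> Kx" using Kx(2) by auto
  have xV: "x \<in> V" "x \<notin> K" using Cl_sub[OF Kx(1)] xmem Kx(2) by auto
  have adjx: "\<forall>w\<in>K. w \<noteq> u \<longrightarrow> adj x w" by (rule type1_miss_uniq[OF K Kx u])
  show False
  proof (cases "{z} \<in> A u K")
    case True
    obtain Kz where Kz: "Kz \<in> Cl" "Kz - K = {z}" using A_mem[OF True] by blast
    show False by (rule three_type1[OF K Kx Ky Kz xyz yz(1)])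
  next
    case False
    hence "{y,z} \<in> A u K" using yz(4) by auto
    then obtain K2 where K2: "K2 \<in> Cl" "u \<in> K2" "K2 - K = {y,z}" using A_mem by blast
    have fK2: "finite K2" using Cl_fin[OF K2(1)] .
    have "card (K2 - K) = card K2 - card (K2 \<inter> K)" by (rule card_Diff_subset_Int) (use fK2 in auto)
    moreover have "card (K2 \<inter> K) \<le> card K2" using fK2 by (intro card_mono) auto
    ultimately have "card (K2 \<inter> K) = r - 2" using K2(3) yz(1) Cl_card[OF K2(1)] r4 by simp
    hence "card (K2 \<inter> K - {u}) = r - 3" using K2(2) u(1) fK2 by simp
    hence "0 < card (K2 \<inter> K - {u})" using r4 by simp
    hence "K2 \<inter> K - {u} \<noteq> {}" by (simp add: card_gt_0_iff)
    then obtain w where w: "w \<in> K2" "w \<in> K" "w \<noteq> u" by auto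
    have yzO: "y \<in> Out u K" "z \<in> Out u K" using yz(2) by auto
    hence yzV: "y \<in> V" "y \<notin> K" "z \<in> V" "z \<notin> K" unfolding Out_def by auto
    have yzK2: "y \<in> K2" "z \<in> K2" using K2(3) by auto
    have "adj y w" "adj z w" using Cl_adj[OF K2(1)] yzK2 w yzV by auto
    moreover have "adj x w" using adjx w by auto
    ultimately show False
      using out_three[OF K w(2) outI[OF K w(2)] outI[OF K w(2)] outI[OF K w(2)] xyz yz(1)]
        xV yzV by auto
  qed
qed

lemma lem_c:
  assumes K: "K \<in> Cl" and v: "v \<in> K" and c3: "3 \<le> c v"
  shows "\<exists>u\<in>K. c u \<le> 2"
proof -
  have "3 \<le> card (A v K)" using c_eq[OF K] c3 by simp
  then obtain y z where yz: "{y} \<in> A v K"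
    using pow3[OF O_fin O_card[OF K v] A_sub[OF K v]] by blast
  obtain Ky where Ky: "Ky \<in> Cl" "Ky - K = {y}" using A_mem[OF yz] by blast
  obtain u where u: "u \<in> K" "\<not> adj y u" using type1_miss[OF K Ky] by blast
  show ?thesis using good[OF K Ky u] u by blast
qed

lemma lem_d:
  assumes K: "K \<in> Cl" and v: "v \<in> K" and c4: "4 \<le> c v"
  shows "\<exists>u1\<in>K. \<exists>u2\<in>K. u1 \<noteq> u2 \<and> c u1 \<le> 2 \<and> c u2 \<le> 2"
proof -
  have "4 \<le> card (A v K)" using c_eq[OF K] c4 by simp
  then obtain y z where yz: "y \<noteq> z" "Out v K = {y,z}" "{y} \<in> A v K" "{z} \<in> A v K" "{y,z} \<in> A v K"
    using pow4[OF O_fin O_card[OF K v] A_sub[OF K v]] by blast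
  obtain Ky where Ky: "Ky \<in> Cl" "Ky - K = {y}" using A_mem[OF yz(3)] by blast
  obtain Kz where Kz: "Kz \<in> Cl" "Kz - K = {z}" using A_mem[OF yz(4)] by blast
  obtain K2 where K2: "K2 \<in> Cl" "K2 - K = {y,z}" using A_mem[OF yz(5)] by blast
  obtain uy where uy: "uy \<in> K" "\<not> adj y uy" "\<forall>w\<in>K. w \<noteq> uy \<longrightarrow> adj y w" using type1_miss[OF K Ky] by blast
  obtain uz where uz: "uz \<in> K" "\<not> adj z uz" "\<forall>w\<in>K. w \<noteq> uz \<longrightarrow> adj z w" using type1_miss[OF K Kz] by blast
  have yzO: "y \<in> Out v K" "z \<in> Out v K" using yz(2) by auto
  hence yzV: "y \<in> V" "y \<notin> K" "z \<in> V" "z \<notin> K" unfolding Out_def by auto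
  have yzK2: "y \<in> K2" "z \<in> K2" using K2(2) by auto
  have ayz: "adj y z" using Cl_adj[OF K2(1) yzK2 yz(1)] .
  have "uy \<noteq> uz"
  proof
    assume eq: "uy = uz"
    let ?X = "insert y (insert z (K - {uy}))"
    have "is_clique V E ?X"
      unfolding clique_iff
    proof (intro conjI ballI impI)
      show "?X \<subseteq> V" using Cl_sub[OF K] yzV by auto
    next
      fix p q assume "p \<in> ?X" "q \<in> ?X" "p \<noteq> q"
      thus "adj p q" using uy(3) uz(3) eq ayz Cl_adj[OF K] adj_sym by auto
    qed
    hence "card ?X \<le> r" by (rule clique_le)
    moreover have "card ?X = r + 1"
      using yzV yz(1) Cl_fin[OF K] Cl_card[OF K] uy(1) r4 by simp
    ultimately show False by simp
  qed
  thus ?thesis using good[OF K Ky uy(1,2)] good[OF K Kz uz(1,2)] uy(1) uz(1) by blast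
qed

end



lemma inv_mono: "1 \<le> n \<Longrightarrow> n \<le> m \<Longrightarrow> 1 / real m \<le> 1 / real (n::nat)"
  by (rule divide_left_mono) auto

context G begin

lemma local_bound: assumes K: "K \<in> Cl"
  shows "(real r + 2) / 4 \<le> (\<Sum>v\<in>K. 1 / real (c v))"
proof -
  let ?f = "\<lambda>v. 1 / real (c v)"
  have fK: "finite K" and cK: "card K = r" using Cl_fin[OF K] Cl_card[OF K] by auto
  have q: "1/4 \<le> ?f v" if "v \<in> K" for v
    using inv_mono[OF c_ge1[OF K that] c_le4[OF K that]] by simp
  have h: "1/2 \<le> ?f v" if "v \<in> K" "c v \<le> 2" for v
    using inv_mono[OF c_ge1[OF K that(1)] that(2)] by simp
  have t: "1/3 \<le> ?f v" if "v \<in> K" "c v \<le> 3" for v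
    using inv_mono[OF c_ge1[OF K that(1)] that(2)] by simp
  show ?thesis
  proof (cases "\<exists>v\<in>K. 4 \<le> c v")
    case True
    then obtain v where v: "v \<in> K" "4 \<le> c v" by blast
    obtain u1 u2 where u: "u1 \<in> K" "u2 \<in> K" "u1 \<noteq> u2" "c u1 \<le> 2" "c u2 \<le> 2"
      using lem_d[OF K v] by blast
    have u2': "u2 \<in> K - {u1}" using u by auto
    have "sum ?f K = ?f u1 + sum ?f (K - {u1})" by (rule sum.remove[OF fK u(1)])
    also have "sum ?f (K - {u1}) = ?f u2 + sum ?f (K - {u1} - {u2})"
      by (rule sum.remove[OF _ u2']) (use fK in auto)
    finally have eq: "sum ?f K = ?f u1 + ?f u2 + sum ?f (K - {u1} - {u2})" by simp
    have cr: "card (K - {u1} - {u2}) = r - 2" using cK u fK by simp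
    have "real (card (K - {u1} - {u2})) * (1/4) \<le> sum ?f (K - {u1} - {u2})"
      by (rule sum_bounded_below) (use q in auto)
    hence "real (r - 2) / 4 \<le> sum ?f (K - {u1} - {u2})" using cr by simp
    moreover have "real (r - 2) = real r - 2" using r4 by simp
    ultimately show ?thesis using eq h[OF u(1) u(4)] h[OF u(2) u(5)] by simp
  next
    case False
    hence le3: "\<forall>v\<in>K. c v \<le> 3" by auto
    show ?thesis
    proof (cases "\<exists>v\<in>K. 3 \<le> c v")
      case True
      then obtain v where v: "v \<in> K" "3 \<le> c v" by blast
      obtain u where u: "u \<in> K" "c u \<le> 2" using lem_c[OF K v] by blast
      have eq: "sum ?f K = ?f u + sum ?f (K - {u})" by (rule sum.remove[OF fK u(1)])
      have cr: "card (K - {u}) = r - 1" using cK u fK by simp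
      have "real (card (K - {u})) * (1/3) \<le> sum ?f (K - {u})"
        by (rule sum_bounded_below) (use t le3 in auto)
      hence "real (r - 1) / 3 \<le> sum ?f (K - {u})" using cr by simp
      moreover have "real (r - 1) = real r - 1" using r4 by simp
      ultimately show ?thesis using eq h[OF u] r4 by simp
    next
      case False
      hence le2: "\<forall>v\<in>K. c v \<le> 2" using le3 by force
      have "real (card K) * (1/2) \<le> sum ?f K"
        by (rule sum_bounded_below) (use h le2 in auto)
      thus ?thesis using cK r4 by simp
    qed
  qed
qed

lemma global_bound: "real (card Cl) * ((real r + 2) / 4) \<le> real (card V)"
proof -
  let ?f = "\<lambda>v. 1 / real (c v)"
  have "real (card Cl) * ((real r + 2) / 4) \<le> (\<Sum>K\<in>Cl. \<Sum>v\<in>K. ?f v)"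
    by (rule sum_bounded_below) (rule local_bound)
  also have "\<dots> = (\<Sum>K\<in>Cl. \<Sum>v\<in>{v. v \<in> V \<and> v \<in> K}. ?f v)"
  proof (rule sum.cong[OF refl])
    fix K assume "K \<in> Cl"
    hence "{v. v \<in> V \<and> v \<in> K} = K" using Cl_sub by auto
    thus "(\<Sum>v\<in>K. ?f v) = (\<Sum>v\<in>{v. v \<in> V \<and> v \<in> K}. ?f v)" by simp
  qed
  also have "\<dots> = (\<Sum>v\<in>V. \<Sum>K\<in>{K. K \<in> Cl \<and> v \<in> K}. ?f v)"
    by (rule sum.swap_restrict[OF finCl finV])
  also have "\<dots> = (\<Sum>v\<in>V. real (c v) * ?f v)"
  proof (rule sum.cong[OF refl])
    fix v assume "v \<in> V"
    have "{K. K \<in> Cl \<and> v \<in> K} = S v" unfolding S_def by auto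
    thus "(\<Sum>K\<in>{K. K \<in> Cl \<and> v \<in> K}. ?f v) = real (c v) * ?f v" unfolding c_def by simp
  qed
  also have "\<dots> \<le> (\<Sum>v\<in>V. 1)"
  proof (rule sum_mono)
    fix v assume "v \<in> V"
    show "real (c v) * ?f v \<le> 1" by (cases "c v = 0") auto
  qed
  also have "\<dots> = real (card V)" by simp
  finally show ?thesis .
qed

lemma rho_bound: assumes "1 \<le> card V" shows "rho r V E \<le> 4 / (real r + 2)"
proof -
  have k: "k_count r V E = card Cl" unfolding k_count_def Cl_def by simp
  have pos: "0 < real (card V)" using assms by simp
  have "real (card Cl) * ((real r + 2) / 4) \<le> real (card V)" by (rule global_bound)
  hence "real (card Cl) * (real r + 2) \<le> 4 * real (card V)" by simp
  hence "real (card Cl) / real (card V) \<le> 4 / (real r + 2)"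
    using pos by (simp add: field_simps)
  thus ?thesis unfolding rho_def k .
qed

end



lemma tE1: assumes "{u,v} \<in> turan_E n r" shows "u < n \<and> v < n \<and> u mod r \<noteq> v mod r"
proof -
  obtain i j where ij: "{u,v} = {i,j}" "i < n" "j < n" "i mod r \<noteq> j mod r"
    using assms unfolding turan_E_def by blast
  from ij(1) have "(u = i \<and> v = j) \<or> (u = j \<and> v = i)" by (simp add: doubleton_eq_iff)
  thus ?thesis using ij by auto
qed

lemma tE2: assumes "u < n" "v < n" "u mod r \<noteq> v mod r" shows "{u,v} \<in> turan_E n r"
  using assms unfolding turan_E_def by blast

lemma tE: "{u,v} \<in> turan_E n r \<longleftrightarrow> u < n \<and> v < n \<and> u mod r \<noteq> v mod r"
  using tE1 tE2 by blast

lemma t_simple: "simple_graph (turan_V n) (turan_E n r)"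
proof -
  have "e \<subseteq> turan_V n \<and> card e = 2" if e: "e \<in> turan_E n r" for e
  proof -
    obtain i j where ij: "e = {i,j}" "i < n" "j < n" "i mod r \<noteq> j mod r"
      using e unfolding turan_E_def by blast
    hence "i \<noteq> j" by auto
    thus ?thesis using ij unfolding turan_V_def by auto
  qed
  moreover have "finite (turan_V n)" unfolding turan_V_def by simp
  ultimately show ?thesis unfolding simple_graph_def by blast
qed

lemma t_deg: "max_degree_le (turan_V (r+2)) (turan_E (r+2) r) (r+1)"
  unfolding max_degree_le_def graph_degree_def
proof
  fix v assume v: "v \<in> turan_V (r+2)"
  have "{u \<in> turan_V (r+2). {u, v} \<in> turan_E (r+2) r} \<subseteq> turan_V (r+2) - {v}"
    using tE by auto
  hence "card {u \<in> turan_V (r+2). {u, v} \<in> turan_E (r+2) r} \<le> card (turan_V (r+2) - {v})"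
    by (intro card_mono) (auto simp: turan_V_def)
  also have "\<dots> = r + 1" using v unfolding turan_V_def by simp
  finally show "card {u \<in> turan_V (r+2). {u, v} \<in> turan_E (r+2) r} \<le> r + 1" .
qed

lemma t_clique: assumes "0 < r" shows "clique_number_le (turan_V n) (turan_E n r) r"
  unfolding clique_number_le_def
proof (intro allI impI)
  fix S assume S: "is_clique (turan_V n) (turan_E n r) S"
  have inj: "inj_on (\<lambda>i. i mod r) S"
    unfolding inj_on_def using S tE unfolding is_clique_def by blast
  have "(\<lambda>i. i mod r) ` S \<subseteq> {0..<r}" using assms by auto
  hence "card ((\<lambda>i. i mod r) ` S) \<le> r" using card_mono[of "{0..<r}"] by fastforce
  thus "card S \<le> r" using card_image[OF inj] by simp
qed

lemma modv: fixes x r :: nat assumes "4 \<le> r" "x < r + 2" shows "x mod r = (if x < r then x else x - r)"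
proof (cases "x < r")
  case True thus ?thesis by simp
next
  case False
  hence "x mod r = (x - r) mod r" by (simp add: le_mod_geq)
  also have "\<dots> = x - r" using assms False by simp
  finally show ?thesis using False by simp
qed

definition Sab :: "nat \<Rightarrow> nat \<Rightarrow> nat \<Rightarrow> nat set" where
  "Sab r a b = insert a (insert b {2..<r})"

lemma Sab_clique:
  assumes r: "4 \<le> r" and a: "a = 0 \<or> a = r" and b: "b = 1 \<or> b = r + 1"
  shows "is_clique (turan_V (r+2)) (turan_E (r+2) r) (Sab r a b) \<and> card (Sab r a b) = r"
proof
  have sub: "Sab r a b \<subseteq> {0..<r+2}" using a b unfolding Sab_def by auto
  have mods: "x mod r = (if x = a then 0 else if x = b then 1 else x)" if "x \<in> Sab r a b" for x
  proof -
    have "x < r + 2" using that sub by auto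
    hence "x mod r = (if x < r then x else x - r)" using modv[OF r] by blast
    thus ?thesis using that a b r unfolding Sab_def by auto
  qed
  show "is_clique (turan_V (r+2)) (turan_E (r+2) r) (Sab r a b)"
    unfolding is_clique_def
  proof (intro conjI ballI impI)
    show "Sab r a b \<subseteq> turan_V (r+2)" using sub unfolding turan_V_def .
  next
    fix x y assume x: "x \<in> Sab r a b" and y: "y \<in> Sab r a b" and ne: "x \<noteq> y"
    have "x mod r \<noteq> y mod r"
      using mods[OF x] mods[OF y] ne x y a b r unfolding Sab_def by (auto split: if_splits)
    thus "{x,y} \<in> turan_E (r+2) r" using tE sub x y by auto
  qed
next
  have "a \<notin> insert b {2..<r}" "b \<notin> {2..<r}" using a b r by auto
  thus "card (Sab r a b) = r" unfolding Sab_def using r by simp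
qed

lemma t_count: assumes r: "4 \<le> r" shows "4 \<le> k_count r (turan_V (r+2)) (turan_E (r+2) r)"
proof -
  let ?C = "{S. is_clique (turan_V (r+2)) (turan_E (r+2) r) S \<and> card S = r}"
  let ?F = "{Sab r 0 1, Sab r 0 (r+1), Sab r r 1, Sab r r (r+1)}"
  have sub: "?F \<subseteq> ?C" using Sab_clique[OF r] by auto
  have fin: "finite ?C"
  proof -
    have "?C \<subseteq> Pow (turan_V (r+2))" unfolding is_clique_def by auto
    thus ?thesis unfolding turan_V_def by (rule finite_subset) simp
  qed
  have m: "0 \<in> Sab r 0 1" "0 \<in> Sab r 0 (r+1)" "0 \<notin> Sab r r 1" "0 \<notin> Sab r r (r+1)"
    "1 \<in> Sab r 0 1" "1 \<in> Sab r r 1" "1 \<notin> Sab r 0 (r+1)" "1 \<notin> Sab r r (r+1)"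
    using r unfolding Sab_def by auto
  have d: "Sab r 0 1 \<noteq> Sab r 0 (r+1)" "Sab r 0 1 \<noteq> Sab r r 1" "Sab r 0 1 \<noteq> Sab r r (r+1)"
          "Sab r 0 (r+1) \<noteq> Sab r r 1" "Sab r 0 (r+1) \<noteq> Sab r r (r+1)" "Sab r r 1 \<noteq> Sab r r (r+1)"
    using m by blast+
  have "card ?F = 4" using d by simp
  moreover have "card ?F \<le> card ?C" by (rule card_mono[OF fin sub])
  ultimately show ?thesis unfolding k_count_def by simp
qed

theorem mainTheorem13:
  fixes r :: nat
  assumes "r \<ge> 4"
  shows "f_sup r (r + 1) r = rho r (turan_V (r + 2)) (turan_E (r + 2) r)
       \<and> rho r (turan_V (r + 2)) (turan_E (r + 2) r) = 4 / (real r + 2)"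
proof -
  have r4: "4 \<le> r" using assms by simp
  have bound: "rho r V E \<le> 4 / (real r + 2)" if "(V, E) \<in> graph_class (r+1) r" "1 \<le> card V"
    for V :: "nat set" and E
  proof -
    interpret G V E r using that(1) r4 unfolding graph_class_def by unfold_locales auto
    show ?thesis by (rule rho_bound[OF that(2)])
  qed
  have inT: "(turan_V (r+2), turan_E (r+2) r) \<in> graph_class (r+1) r"
    unfolding graph_class_def using t_simple t_deg t_clique r4 by auto
  have cT: "card (turan_V (r+2)) = r + 2" unfolding turan_V_def by simp
  have le: "rho r (turan_V (r+2)) (turan_E (r+2) r) \<le> 4 / (real r + 2)"
    using bound[OF inT] cT by simp
  have "4 / (real r + 2) \<le> real (k_count r (turan_V (r+2)) (turan_E (r+2) r)) / (real r + 2)"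
    using t_count[OF r4] by (intro divide_right_mono) auto
  moreover have "rho r (turan_V (r+2)) (turan_E (r+2) r) = real (k_count r (turan_V (r+2)) (turan_E (r+2) r)) / (real r + 2)"
    unfolding rho_def cT by simp
  ultimately have ge: "4 / (real r + 2) \<le> rho r (turan_V (r+2)) (turan_E (r+2) r)"
    by simp
  have eq: "rho r (turan_V (r+2)) (turan_E (r+2) r) = 4 / (real r + 2)" using le ge by linarith
  have "f_sup r (r + 1) r = 4 / (real r + 2)"
    unfolding f_sup_def
  proof (rule cSup_eq_maximum)
    show "4 / (real r + 2) \<in> {rho r V E |V E. (V, E) \<in> graph_class (r + 1) r \<and> 1 \<le> card V}"
      using inT cT eq[symmetric] by fastforce
  next
    fix x assume "x \<in> {rho r V E |V E. (V, E) \<in> graph_class (r + 1) r \<and> 1 \<le> card V}"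
    then obtain V E where "x = rho r V E" "(V, E) \<in> graph_class (r + 1) r" "1 \<le> card V" by blast
    thus "x \<le> 4 / (real r + 2)" using bound by blast
  qed
  thus ?thesis using eq by simp
qed


end
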